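(* Let $A \in \mathfrak t$, let $\Phi_{\mathfrak h} = \{\alpha \in \Phi_{\mathfrak g} : \alpha(A) = 0\}$, let $U = \bigcap_{\alpha \in \Phi_{\mathfrak h}} \ker(\alpha) \subseteq \mathfrak t$ (with $U = \mathfrak t$ if $\Phi_{\mathfrak h} = \varnothing$), and let $$\mathbf B = U \cap \bigcap_{\alpha \in \Phi_{\mathfrak g} \setminus \Phi_{\mathfrak h}} \bigl(\mathfrak t \setminus \ker(\alpha)\bigr) \subseteq \mathfrak t .$$ Then $\operatorname{Stab}_{W_{\mathfrak g}}(U) = \operatorname{Stab}_{W_{\mathfrak g}}(\mathbf B)$, and $(W_{\mathfrak g} A) \cap \mathbf B = \mathcal O_A$, where $\mathcal O_A$ is the orbit of $A$ under the group $\operatorname{Stab}_{W_{\mathfrak g}}(\mathbf B)$.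
   Context: $G$ is a connected complex reductive Lie group, $\mathfrak g = \mathrm{Lie}(G)$, $T \subseteq G$ a maximal torus, $\mathfrak t = \mathrm{Lie}(T)$, $\Phi_{\mathfrak g} \subseteq \mathfrak t^\vee$ the root system of $(\mathfrak g,\mathfrak t)$, and $W_{\mathfrak g} = N_G(T)/T$ the Weyl group, acting on $\mathfrak t$. For a subset $S \subseteq \mathfrak t$, the setwise stabiliser is $\operatorname{Stab}_{W_{\mathfrak g}}(S) = \{w \in W_{\mathfrak g} : w(S) \subseteq S\}$. *)

theory Defs
  imports "HOL-Analysis.Analysis"
begin

text \<open>The Cartan subalgebra t is modelled as complex ^ 'n (coordinates w.r.t. a basis);
  its dual is identified with complex ^ 'n via the coordinate pairing.\<close>

definition pair :: "complex ^ 'n \<Rightarrow> complex ^ 'n \<Rightarrow> complex" where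
  "pair \<alpha> x = (\<Sum>i\<in>UNIV. \<alpha> $ i * x $ i)"

definition refl :: "complex ^ 'n \<Rightarrow> complex ^ 'n \<Rightarrow> complex ^ 'n \<Rightarrow> complex ^ 'n" where
  "refl \<alpha> \<alpha>v x = x - pair \<alpha> x *s \<alpha>v"

text \<open>Dual reflection on t-dual: beta maps to beta - beta(alpha-check) alpha (= beta o s_alpha).\<close>
definition refl_dual :: "complex ^ 'n \<Rightarrow> complex ^ 'n \<Rightarrow> complex ^ 'n \<Rightarrow> complex ^ 'n" where
  "refl_dual \<alpha> \<alpha>v \<beta> = \<beta> - pair \<beta> \<alpha>v *s \<alpha>"

text \<open>Reduced root datum (roots Phi in t-dual, coroot map cor into t), as arising from
  (G,T) for a connected complex reductive group G.\<close>
definition reduced_root_datum ::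
  "(complex ^ 'n) set \<Rightarrow> (complex ^ 'n \<Rightarrow> complex ^ 'n) \<Rightarrow> bool" where
  "reduced_root_datum \<Phi> cor \<longleftrightarrow>
     finite \<Phi> \<and> 0 \<notin> \<Phi> \<and>
     (\<forall>\<alpha>\<in>\<Phi>. pair \<alpha> (cor \<alpha>) = 2) \<and>
     (\<forall>\<alpha>\<in>\<Phi>. \<forall>\<beta>\<in>\<Phi>. pair \<beta> (cor \<alpha>) \<in> \<int>) \<and>
     (\<forall>\<alpha>\<in>\<Phi>. \<forall>\<beta>\<in>\<Phi>. refl_dual \<alpha> (cor \<alpha>) \<beta> \<in> \<Phi>) \<and>
     (\<forall>\<alpha>\<in>\<Phi>. \<forall>\<beta>\<in>\<Phi>. cor (refl_dual \<alpha> (cor \<alpha>) \<beta>) = refl \<alpha> (cor \<alpha>) (cor \<beta>)) \<and>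
     (\<forall>\<alpha>\<in>\<Phi>. \<forall>c. c *s \<alpha> \<in> \<Phi> \<longrightarrow> c = 1 \<or> c = -1)"

inductive_set weyl_group ::
  "(complex ^ 'n) set \<Rightarrow> (complex ^ 'n \<Rightarrow> complex ^ 'n) \<Rightarrow> (complex ^ 'n \<Rightarrow> complex ^ 'n) set"
  for \<Phi> cor where
  id: "id \<in> weyl_group \<Phi> cor"
| step: "\<alpha> \<in> \<Phi> \<Longrightarrow> w \<in> weyl_group \<Phi> cor \<Longrightarrow> refl \<alpha> (cor \<alpha>) \<circ> w \<in> weyl_group \<Phi> cor"

definition setwise_stab ::
  "(complex ^ 'n \<Rightarrow> complex ^ 'n) set \<Rightarrow> (complex ^ 'n) set \<Rightarrow> (complex ^ 'n \<Rightarrow> complex ^ 'n) set" where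
  "setwise_stab W S = {w \<in> W. w ` S \<subseteq> S}"

end

theory Submission
  imports Defs
begin

lemma pair_add: "pair a (x + y) = pair a x + pair a y"
  unfolding pair_def by (simp add: distrib_left sum.distrib)
lemma pair_diff: "pair a (x - y) = pair a x - pair a y"
  unfolding pair_def by (simp add: right_diff_distrib sum_subtractf)
lemma pair_scale: "pair a (c *s x) = c * pair a x"
  unfolding pair_def by (simp add: sum_distrib_left algebra_simps)
lemma pair_diff_left: "pair (a - b) x = pair a x - pair b x"
  unfolding pair_def by (simp add: left_diff_distrib sum_subtractf)
lemma pair_scale_left: "pair (c *s a) x = c * pair a x"
  unfolding pair_def by (simp add: sum_distrib_left algebra_simps)

lemma pair_refl: "pair a (refl g v y) = pair (refl_dual g v a) y"
  unfolding refl_def refl_dual_def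
  by (simp add: pair_diff pair_diff_left pair_scale pair_scale_left algebra_simps)

lemma refl_add: "refl g v (x + y) = refl g v x + refl g v y"
  unfolding refl_def by (simp add: pair_add vector_sadd_rdistrib algebra_simps)

lemma refl_scale: "refl g v (c *s x) = c *s refl g v x"
  unfolding refl_def by (simp add: pair_scale vector_ssub_ldistrib)

lemma refl_invol: assumes "pair g v = 2" shows "refl g v (refl g v x) = x"
proof -
  have "pair g (refl g v x) = - pair g x"
    unfolding refl_def using assms by (simp add: pair_diff pair_scale)
  then show ?thesis unfolding refl_def[of g v "refl g v x"]
    by (simp add: refl_def)
qed

lemma surj_comp_cancel: assumes "surj w" shows "g \<circ> w = h \<circ> w \<Longrightarrow> g = h"
proof
  fix y assume e: "g \<circ> w = h \<circ> w"
  obtain z where "y = w z" using assms by (metis surjD)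
  then show "g y = h y" using e by (metis comp_apply)
qed

lemma W_props:
  assumes rd: "reduced_root_datum \<Phi> cor" and w: "w \<in> weyl_group \<Phi> cor"
  shows "inj w \<and> surj w \<and> (\<forall>x y. w (x+y) = w x + w y) \<and> (\<forall>c x. w (c *s x) = c *s w x)
     \<and> (\<forall>\<alpha>\<in>\<Phi>. \<exists>\<beta>\<in>\<Phi>. \<forall>x. pair \<alpha> (w x) = pair \<beta> x)"
  using w
proof induction
  case id
  then show ?case by auto
next
  case (step \<gamma> w)
  let ?s = "refl \<gamma> (cor \<gamma>)"
  have two: "pair \<gamma> (cor \<gamma>) = 2" using rd step(1) unfolding reduced_root_datum_def by blast
  have inv: "?s (?s x) = x" for x using refl_invol[OF two] .
  have "inj ?s" by (metis inv injI)
  moreover have "surj ?s" by (metis inv surjI)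
  moreover have D: "\<forall>\<alpha>\<in>\<Phi>. \<exists>\<beta>\<in>\<Phi>. \<forall>x. pair \<alpha> ((?s \<circ> w) x) = pair \<beta> x"
  proof
    fix \<alpha> assume a: "\<alpha> \<in> \<Phi>"
    have "refl_dual \<gamma> (cor \<gamma>) \<alpha> \<in> \<Phi>" using rd step(1) a unfolding reduced_root_datum_def by blast
    then obtain \<beta> where "\<beta> \<in> \<Phi>" "\<forall>x. pair (refl_dual \<gamma> (cor \<gamma>) \<alpha>) (w x) = pair \<beta> x"
      using step(3) by blast
    then show "\<exists>\<beta>\<in>\<Phi>. \<forall>x. pair \<alpha> ((?s \<circ> w) x) = pair \<beta> x"
      by (auto simp: pair_refl)
  qed
  ultimately have "inj (?s \<circ> w)" "surj (?s \<circ> w)" using step(3)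
    by (metis inj_compose, metis comp_surj)
  moreover have "(\<forall>x y. (?s \<circ> w) (x+y) = (?s \<circ> w) x + (?s \<circ> w) y) \<and> (\<forall>c x. (?s \<circ> w) (c *s x) = c *s (?s \<circ> w) x)"
    using step(3) by (simp add: refl_add refl_scale)
  ultimately show ?case using D by blast
qed

theorem lemma2p1:
  fixes \<Phi> :: "(complex ^ 'n) set" and cor :: "complex ^ 'n \<Rightarrow> complex ^ 'n"
    and A :: "complex ^ 'n"
  assumes "reduced_root_datum \<Phi> cor"
  defines "W \<equiv> weyl_group \<Phi> cor"
  defines "\<Phi>h \<equiv> {\<alpha> \<in> \<Phi>. pair \<alpha> A = 0}"
  defines "U \<equiv> {x. \<forall>\<alpha>\<in>\<Phi>h. pair \<alpha> x = 0}"
  defines "B \<equiv> U \<inter> {x. \<forall>\<alpha>\<in>\<Phi> - \<Phi>h. pair \<alpha> x \<noteq> 0}"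
  shows "setwise_stab W U = setwise_stab W B \<and>
         (\<lambda>w. w A) ` W \<inter> B = (\<lambda>w. w A) ` setwise_stab W B"
proof -
  have fin: "finite \<Phi>" using assms(1) unfolding reduced_root_datum_def by blast
  have AU: "A \<in> U" unfolding U_def \<Phi>h_def by auto
  have AB: "A \<in> B" unfolding B_def \<Phi>h_def using AU by auto
  have BU: "B \<subseteq> U" unfolding B_def by auto
  note WP = W_props[OF assms(1), folded W_def]
  have C1: "w ` B \<subseteq> B" if w: "w \<in> W" and wU: "w ` U \<subseteq> U" for w
  proof
    fix y assume "y \<in> w ` B"
    then obtain x where x: "x \<in> B" and y: "y = w x" by auto
    have "w x \<in> U" using x BU wU by auto
    moreover have "pair \<alpha> (w x) \<noteq> 0" if a: "\<alpha> \<in> \<Phi> - \<Phi>h" for \<alpha>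
    proof
      assume z: "pair \<alpha> (w x) = 0"
      obtain \<beta> where b: "\<beta> \<in> \<Phi>" "\<forall>x. pair \<alpha> (w x) = pair \<beta> x" using WP[OF w] a by blast
      show False
      proof (cases "\<beta> \<in> \<Phi>h")
        case False
        then show False using x b z unfolding B_def by auto
      next
        case True
        let ?P = "pair ` \<Phi>h"
        let ?f = "\<lambda>g. g \<circ> w"
        have "?f ` ?P \<subseteq> ?P"
        proof
          fix h assume "h \<in> ?f ` ?P"
          then obtain \<gamma> where g: "\<gamma> \<in> \<Phi>h" "h = pair \<gamma> \<circ> w" by auto
          obtain \<delta> where d: "\<delta> \<in> \<Phi>" "\<forall>x. pair \<gamma> (w x) = pair \<delta> x"
            using WP[OF w] g unfolding \<Phi>h_def by blast
          have "w A \<in> U" using AU wU by auto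
          then have "pair \<gamma> (w A) = 0" using g(1) unfolding U_def by blast
          then have "pair \<delta> A = 0" using d by simp
          then have "\<delta> \<in> \<Phi>h" using d unfolding \<Phi>h_def by auto
          moreover have "h = pair \<delta>" using g d by auto
          ultimately show "h \<in> ?P" by auto
        qed
        moreover have "inj_on ?f ?P"
        proof (rule inj_onI)
          fix g h assume "g \<circ> w = h \<circ> w"
          then show "g = h" using surj_comp_cancel[OF conjunct1[OF conjunct2[OF WP[OF w]]]] by blast
        qed
        moreover have "finite ?P" using fin unfolding \<Phi>h_def by auto
        ultimately have "?f ` ?P = ?P" by (metis endo_inj_surj)
        moreover have "pair \<beta> \<in> ?P" using True by auto
        ultimately have "pair \<beta> \<in> ?f ` ?P" by simp
        then obtain h where h: "h \<in> ?P" "pair \<beta> = h \<circ> w" by blast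
        then obtain \<gamma> where g: "\<gamma> \<in> \<Phi>h" "pair \<beta> = pair \<gamma> \<circ> w" by blast
        have "pair \<alpha> \<circ> w = pair \<gamma> \<circ> w" using b g by (auto simp: fun_eq_iff)
        then have "pair \<alpha> = pair \<gamma>" using surj_comp_cancel[OF conjunct1[OF conjunct2[OF WP[OF w]]]] by blast
        then have "pair \<alpha> A = 0" using g unfolding \<Phi>h_def by auto
        then show False using a unfolding \<Phi>h_def by auto
      qed
    qed
    ultimately show "y \<in> B" unfolding B_def using y by auto
  qed
  have C2: "w ` U \<subseteq> U" if w: "w \<in> W" and wB: "w ` B \<subseteq> B" for w
  proof
    fix y assume "y \<in> w ` U"
    then obtain x where x: "x \<in> U" and y: "y = w x" by auto
    let ?Bad = "(\<lambda>\<alpha>. - pair \<alpha> A / pair \<alpha> x) ` \<Phi>"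
    have "finite (insert 0 ?Bad)" using fin by auto
    then obtain t where t: "t \<notin> insert 0 ?Bad"
      using ex_new_if_finite[OF infinite_UNIV_char_0] by blast
    have tB: "A + t *s x \<in> B"
    proof -
      have "A + t *s x \<in> U" using AU x unfolding U_def by (auto simp: pair_add pair_scale)
      moreover have "pair \<alpha> (A + t *s x) \<noteq> 0" if a: "\<alpha> \<in> \<Phi> - \<Phi>h" for \<alpha>
      proof
        assume z: "pair \<alpha> (A + t *s x) = 0"
        have nA: "pair \<alpha> A \<noteq> 0" using a unfolding \<Phi>h_def by auto
        have e: "pair \<alpha> A + t * pair \<alpha> x = 0" using z by (simp add: pair_add pair_scale)
        then have nx: "pair \<alpha> x \<noteq> 0" using nA by auto
        have "t * pair \<alpha> x = - pair \<alpha> A" using e by (simp add: eq_neg_iff_add_eq_0 add.commute)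
        then have "t = - pair \<alpha> A / pair \<alpha> x" using nx by (simp add: field_simps)
        then show False using t a by auto
      qed
      ultimately show ?thesis unfolding B_def by auto
    qed
    have wsum: "w (A + t *s x) = w A + t *s w x" using WP[OF w] by auto
    have "w (A + t *s x) \<in> U" "w A \<in> U" using tB AB wB BU by auto
    then have "pair \<alpha> (w x) = 0" if "\<alpha> \<in> \<Phi>h" for \<alpha>
      using that t unfolding U_def wsum by (auto simp: pair_add pair_scale)
    then show "y \<in> U" unfolding U_def y by auto
  qed
  have S: "setwise_stab W U = setwise_stab W B"
    unfolding setwise_stab_def using C1 C2 by blast
  have O: "(\<lambda>w. w A) ` W \<inter> B = (\<lambda>w. w A) ` setwise_stab W B"
  proof
    show "(\<lambda>w. w A) ` W \<inter> B \<subseteq> (\<lambda>w. w A) ` setwise_stab W B"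
    proof
      fix y assume "y \<in> (\<lambda>w. w A) ` W \<inter> B"
      then obtain w where w: "w \<in> W" "y = w A" "w A \<in> B" by auto
      have "w ` U \<subseteq> U"
      proof
        fix z assume "z \<in> w ` U"
        then obtain x where x: "x \<in> U" "z = w x" by auto
        have "pair \<alpha> (w x) = 0" if a: "\<alpha> \<in> \<Phi>h" for \<alpha>
        proof -
          obtain \<beta> where b: "\<beta> \<in> \<Phi>" "\<forall>x. pair \<alpha> (w x) = pair \<beta> x"
            using WP[OF w(1)] a unfolding \<Phi>h_def by blast
          have "pair \<alpha> (w A) = 0" using w(3) BU a unfolding U_def by auto
          then have "\<beta> \<in> \<Phi>h" using b unfolding \<Phi>h_def by auto
          then show ?thesis using b x unfolding U_def by auto
        qed
        then show "z \<in> U" using x unfolding U_def by auto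
      qed
      then have "w \<in> setwise_stab W B" using C1 w unfolding setwise_stab_def by auto
      then show "y \<in> (\<lambda>w. w A) ` setwise_stab W B" using w by auto
    qed
    show "(\<lambda>w. w A) ` setwise_stab W B \<subseteq> (\<lambda>w. w A) ` W \<inter> B"
      using AB unfolding setwise_stab_def by auto
  qed
  show ?thesis using S O by blast
qed

end
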